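(* Let $d\ge1$ and let $H\subseteq\{0,\dots,d\}^{d+1}$ be an octahedral system with $|H|\le d^2$. Then $H$ contains no isolated edge; that is, for every $e\in H$ there exists $f\in H$, $f\neq e$, that differs from $e$ in exactly one coordinate.
   Context: Fix $d\ge1$. There are $d+1$ colours $0,1,\dots,d$, and each colour class consists of $d+1$ points labelled $0,\dots,d$. An edge is a tuple $e=(e_0,\dots,e_d)\in\{0,\dots,d\}^{d+1}$ (point $e_i$ of colour $i$ for each $i$); a hypergraph is a set $H$ of such tuples. For a colour $i$, an $\hat i$-transversal is a tuple $t=(t_k)_{k\ne i}\in\{0,\dots,d\}^{\{0,\dots,d\}\setminus\{i\}}$ (one point of every colour except $i$); an $\hat i$-octahedron is a pair of $\hat i$-transversals $t,t'$ with $t_k\neq t'_k$ for all $k\ne i$. $H$ is an octahedral system if for every colour $i$, every $\hat i$-octahedron $(t,t')$, the parity of $|\{e\in H: e_i=s,\ e_k\in\{t_k,t'_k\}\ \forall k\ne i\}|$ is the same for all $s\in\{0,\dots,d\}$. An edge $e\in H$ is isolated in $H$ if no other edge of $H$ differs from $e$ in exactly one coordinate. *)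

theory Defs
  imports "HOL-Library.FuncSet"
begin

text \<open>Colours and point labels are both {0..d}. An edge is a function
  from colours {..d} to points {..d} (extensional, as in PiE).\<close>

definition edges :: "nat \<Rightarrow> (nat \<Rightarrow> nat) set" where
  "edges d = (\<Pi>\<^sub>E k\<in>{..d}. {..d})"

definition transversals :: "nat \<Rightarrow> nat \<Rightarrow> (nat \<Rightarrow> nat) set" where
  "transversals d i = (\<Pi>\<^sub>E k\<in>{..d} - {i}. {..d})"

definition is_octahedron :: "nat \<Rightarrow> nat \<Rightarrow> (nat \<Rightarrow> nat) \<Rightarrow> (nat \<Rightarrow> nat) \<Rightarrow> bool" where
  "is_octahedron d i t t' \<longleftrightarrow> t \<in> transversals d i \<and> t' \<in> transversals d i \<and>
     (\<forall>k\<in>{..d} - {i}. t k \<noteq> t' k)"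

definition octa_count :: "nat \<Rightarrow> (nat \<Rightarrow> nat) set \<Rightarrow> nat \<Rightarrow> (nat \<Rightarrow> nat) \<Rightarrow> (nat \<Rightarrow> nat) \<Rightarrow> nat \<Rightarrow> nat" where
  "octa_count d H i t t' s = card {e \<in> H. e i = s \<and> (\<forall>k\<in>{..d} - {i}. e k \<in> {t k, t' k})}"

definition octahedral_system :: "nat \<Rightarrow> (nat \<Rightarrow> nat) set \<Rightarrow> bool" where
  "octahedral_system d H \<longleftrightarrow> H \<subseteq> edges d \<and>
     (\<forall>i\<in>{..d}. \<forall>t t'. is_octahedron d i t t' \<longrightarrow>
        (\<forall>s\<in>{..d}. \<forall>s'\<in>{..d}. even (octa_count d H i t t' s) = even (octa_count d H i t t' s')))"

definition differ_in_one :: "nat \<Rightarrow> (nat \<Rightarrow> nat) \<Rightarrow> (nat \<Rightarrow> nat) \<Rightarrow> bool" where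
  "differ_in_one d e f \<longleftrightarrow> card {k\<in>{..d}. e k \<noteq> f k} = 1"

definition isolated :: "nat \<Rightarrow> (nat \<Rightarrow> nat) set \<Rightarrow> (nat \<Rightarrow> nat) \<Rightarrow> bool" where
  "isolated d H e \<longleftrightarrow> e \<in> H \<and> \<not> (\<exists>f\<in>H. f \<noteq> e \<and> differ_in_one d e f)"

end

theory Submission
  imports Defs
begin

lemma two_elems:
  assumes "finite D" "D \<noteq> {}" "card D \<noteq> 1"
  shows "\<exists>p\<in>D. \<exists>q\<in>D. p \<noteq> q"
proof (rule ccontr)
  assume "\<not> ?thesis"
  then obtain p where "D = {p}" using assms(2) by blast
  then show False using assms(3) by simp
qed

lemma fiber_card:
  fixes e :: "nat \<Rightarrow> nat"
  assumes "p \<le> d" "q \<le> d" "p \<noteq> q" "\<forall>k\<le>d. e k \<le> d"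
  shows "card {a \<in> (\<Pi>\<^sub>E k\<in>{..d}. {..d} - {e k}). a p = c \<and> a q = c'} \<le> d ^ (d - 1)"
proof -
  let ?S = "{a \<in> (\<Pi>\<^sub>E k\<in>{..d}. {..d} - {e k}). a p = c \<and> a q = c'}"
  let ?I = "{..d} - {p, q}"
  let ?T = "\<Pi>\<^sub>E k\<in>?I. {..d} - {e k}"
  have inj: "inj_on (\<lambda>a. restrict a ?I) ?S"
  proof (rule inj_onI)
    fix a b assume a: "a \<in> ?S" and b: "b \<in> ?S" and eq: "restrict a ?I = restrict b ?I"
    show "a = b"
    proof
      fix k
      show "a k = b k"
      proof (cases "k \<in> ?I")
        case True then show ?thesis using eq by (metis restrict_apply')
      next
        case False
        then have "k = p \<or> k = q \<or> k \<notin> {..d}" by blast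
        moreover have "a p = b p" "a q = b q" using a b by simp_all
        moreover have "k \<notin> {..d} \<Longrightarrow> a k = b k"
        proof -
          assume k: "k \<notin> {..d}"
          have "a \<in> extensional {..d}" "b \<in> extensional {..d}"
            using a b PiE_iff by blast+
          then show "a k = b k" using k extensional_arb by metis
        qed
        ultimately show ?thesis by blast
      qed
    qed
  qed
  have sub: "(\<lambda>a. restrict a ?I) ` ?S \<subseteq> ?T"
  proof
    fix x assume "x \<in> (\<lambda>a. restrict a ?I) ` ?S"
    then obtain a where a: "a \<in> ?S" "x = restrict a ?I" by blast
    then have "\<forall>i\<in>?I. a i \<in> {..d} - {e i}" using PiE_mem by fastforce
    then show "x \<in> ?T" unfolding a(2) restrict_PiE_iff .
  qed
  have fT: "finite ?T" by (simp add: finite_PiE)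
  have "card ?S \<le> card ?T" using card_inj_on_le[OF inj sub fT] .
  also have "card ?T = (\<Prod>k\<in>?I. card ({..d} - {e k}))" by (simp add: card_PiE)
  also have "\<dots> = (\<Prod>k\<in>?I. d)"
  proof (rule prod.cong)
    fix k assume "k \<in> ?I"
    then have "e k \<le> d" using assms(4) by auto
    then show "card ({..d} - {e k}) = d" by simp
  qed simp
  also have "\<dots> = d ^ card ?I" by simp
  also have "card ?I = d - 1"
  proof -
    have "card ?I = card {..d} - card {p, q}"
      using assms by (intro card_Diff_subset) auto
    then show ?thesis using assms(3) by simp
  qed
  finally show ?thesis by simp
qed

lemma main:
  fixes d :: nat and H :: "(nat \<Rightarrow> nat) set"
  assumes d1: "d \<ge> 1" and oct: "octahedral_system d H" and eH: "e \<in> H"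
    and iso: "\<not> (\<exists>f\<in>H. f \<noteq> e \<and> differ_in_one d e f)"
  shows "d ^ 2 < card H"
proof -
  have HE: "H \<subseteq> edges d" using oct by (simp add: octahedral_system_def)
  have fin: "finite H" using HE finite_subset[OF HE] by (simp add: edges_def finite_PiE)
  have eE: "e \<in> edges d" using HE eH by blast
  have ebd: "\<forall>k\<le>d. e k \<le> d" using eE by (auto simp: edges_def PiE_def Pi_def)
  define A where "A = (\<Pi>\<^sub>E k\<in>{..d}. {..d} - {e k})"
  have cardA: "card A = d ^ (d + 1)"
  proof -
    have "card A = (\<Prod>k\<in>{..d}. card ({..d} - {e k}))" by (simp add: A_def card_PiE)
    also have "\<dots> = (\<Prod>k\<in>{..d}. d)"
      by (rule prod.cong) (use ebd in auto)
    finally show ?thesis by simp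
  qed
  have key: "\<exists>f\<in>H - {e}. \<forall>k\<le>d. f k = e k \<or> f k = a k" if aA: "a \<in> A" for a
  proof -
    define t where "t = restrict e ({..d} - {0})"
    define t' where "t' = restrict a ({..d} - {0})"
    have abd: "\<forall>k\<le>d. a k \<le> d \<and> a k \<noteq> e k" using aA by (auto simp: A_def PiE_def Pi_def)
    have t1: "t \<in> transversals d 0"
      unfolding t_def transversals_def restrict_PiE_iff
    proof
      fix i assume "i \<in> {..d} - {0}"
      then have "i \<le> d" by simp
      then show "e i \<in> {..d}" using ebd by simp
    qed
    have t2: "t' \<in> transversals d 0"
      unfolding t'_def transversals_def restrict_PiE_iff
    proof
      fix i assume "i \<in> {..d} - {0}"
      then have "i \<le> d" by simp
      then show "a i \<in> {..d}" using abd by simp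
    qed
    have t3: "\<forall>k\<in>{..d} - {0}. t k \<noteq> t' k"
    proof
      fix k assume k: "k \<in> {..d} - {0}"
      then have "k \<le> d" by simp
      then have "a k \<noteq> e k" using abd by simp
      then show "t k \<noteq> t' k" using k unfolding t_def t'_def by simp
    qed
    have octa: "is_octahedron d 0 t t'"
      unfolding is_octahedron_def using t1 t2 t3 by blast
    have par: "even (octa_count d H 0 t t' (e 0)) = even (octa_count d H 0 t t' (a 0))"
    proof -
      have all: "\<forall>i\<in>{..d}. \<forall>t t'. is_octahedron d i t t' \<longrightarrow>
        (\<forall>s\<in>{..d}. \<forall>s'\<in>{..d}. even (octa_count d H i t t' s) = even (octa_count d H i t t' s'))"
        using oct unfolding octahedral_system_def by (rule conjunct2)
      have h0: "0 \<in> {..d}" by simp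
      have h1: "e 0 \<in> {..d}" using ebd by simp
      have h2: "a 0 \<in> {..d}" using abd by simp
      have "\<forall>s\<in>{..d}. \<forall>s'\<in>{..d}. even (octa_count d H 0 t t' s) = even (octa_count d H 0 t t' s')"
      proof -
        have imp: "is_octahedron d 0 t t' \<longrightarrow> (\<forall>s\<in>{..d}. \<forall>s'\<in>{..d}. even (octa_count d H 0 t t' s) = even (octa_count d H 0 t t' s'))"
          using bspec[OF all h0] by (drule_tac x=t in spec, drule_tac x=t' in spec)
        show ?thesis using imp octa by (rule mp)
      qed
      then have "\<forall>s'\<in>{..d}. even (octa_count d H 0 t t' (e 0)) = even (octa_count d H 0 t t' s')"
        using h1 by (rule bspec)
      then show ?thesis using h2 by (rule bspec)
    qed
    define C where "C s = {f \<in> H. f 0 = s \<and> (\<forall>k\<in>{..d} - {0}. f k \<in> {t k, t' k})}" for s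
    have par': "even (card (C (e 0))) = even (card (C (a 0)))"
      using par unfolding octa_count_def C_def .
    have good: "\<forall>k\<le>d. f k = e k \<or> f k = a k" if "f \<in> C s" "s = e 0 \<or> s = a 0" for f s
    proof (intro allI impI)
      fix k assume "k \<le> d"
      then show "f k = e k \<or> f k = a k"
        using that by (cases "k = 0") (auto simp: C_def t_def t'_def)
    qed
    show ?thesis
    proof (cases "C (a 0) = {}")
      case False
      then obtain f where f: "f \<in> C (a 0)" by blast
      then have "f 0 \<noteq> e 0" using abd by (auto simp: C_def)
      then have "f \<noteq> e" by auto
      moreover have "f \<in> H" using f by (simp add: C_def)
      ultimately show ?thesis using good[OF f] by blast
    next
      case True
      then have ev: "even (card (C (e 0)))" using par' by simp
      have eC: "e \<in> C (e 0)" using eH by (auto simp: C_def t_def t'_def)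
      have fC: "finite (C (e 0))" using fin by (simp add: C_def)
      have "C (e 0) \<noteq> {e}" using ev by auto
      then obtain f where f: "f \<in> C (e 0)" "f \<noteq> e" using eC by blast
      then have "f \<in> H" by (simp add: C_def)
      then show ?thesis using good[OF f(1)] f(2) by blast
    qed
  qed
  have two: "\<exists>p q. p \<le> d \<and> q \<le> d \<and> p \<noteq> q \<and> e p \<noteq> f p \<and> e q \<noteq> f q" if fH: "f \<in> H - {e}" for f
  proof -
    define D where "D = {k\<in>{..d}. e k \<noteq> f k}"
    have fE: "f \<in> edges d" using fH HE by blast
    have "D \<noteq> {}"
    proof
      assume "D = {}"
      have "e = f"
      proof (rule PiE_ext[of e "{..d}" "\<lambda>_. {..d}"])
        show "e \<in> (\<Pi>\<^sub>E k\<in>{..d}. {..d})" using eE unfolding edges_def .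
        show "f \<in> (\<Pi>\<^sub>E k\<in>{..d}. {..d})" using fE unfolding edges_def .
        fix i assume "i \<in> {..d}"
        then show "e i = f i" using \<open>D = {}\<close> unfolding D_def by blast
      qed
      then show False using fH by blast
    qed
    moreover have "card D \<noteq> 1"
    proof
      assume "card D = 1"
      then have "differ_in_one d e f" unfolding differ_in_one_def D_def .
      then show False using iso fH by blast
    qed
    moreover have "finite D" by (simp add: D_def)
    ultimately obtain p q where "p \<in> D" "q \<in> D" "p \<noteq> q" using two_elems by blast
    then show ?thesis unfolding D_def by blast
  qed
  obtain P Q where PQ: "\<forall>f\<in>H - {e}. P f \<le> d \<and> Q f \<le> d \<and> P f \<noteq> Q f \<and> e (P f) \<noteq> f (P f) \<and> e (Q f) \<noteq> f (Q f)"
    using two by metis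
  define F where "F f = {a \<in> A. a (P f) = f (P f) \<and> a (Q f) = f (Q f)}" for f
  have cover: "A \<subseteq> (\<Union>f\<in>H - {e}. F f)"
  proof
    fix a assume aA: "a \<in> A"
    then obtain f where f: "f \<in> H - {e}" "\<forall>k\<le>d. f k = e k \<or> f k = a k" using key by blast
    then have "a (P f) = f (P f) \<and> a (Q f) = f (Q f)" using PQ by metis
    then show "a \<in> (\<Union>f\<in>H - {e}. F f)" using f aA by (auto simp: F_def)
  qed
  have Fc: "card (F f) \<le> d ^ (d - 1)" if "f \<in> H - {e}" for f
    unfolding F_def A_def using fiber_card[of "P f" d "Q f" e] PQ that ebd by auto
  have fA: "finite A" by (simp add: A_def finite_PiE)
  have fU: "finite (\<Union>f\<in>H - {e}. F f)" using fin fA by (simp add: F_def)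
  have "d ^ (d + 1) \<le> card (\<Union>f\<in>H - {e}. F f)"
    using cardA card_mono[OF fU cover] by simp
  also have "\<dots> \<le> (\<Sum>f\<in>H - {e}. card (F f))" by (rule card_UN_le) (use fin in simp)
  also have "\<dots> \<le> (\<Sum>f\<in>H - {e}. d ^ (d - 1))" by (rule sum_mono) (use Fc in auto)
  also have "\<dots> = (card H - 1) * d ^ (d - 1)" using fin eH by simp
  finally have ineq: "d ^ (d + 1) \<le> (card H - 1) * d ^ (d - 1)" .
  have ex: "d + 1 = 2 + (d - 1)" using d1 by simp
  have "d ^ (d + 1) = d ^ 2 * d ^ (d - 1)" unfolding ex by (rule power_add)
  then have le: "d ^ 2 * d ^ (d - 1) \<le> (card H - 1) * d ^ (d - 1)" using ineq by simp
  have pos: "0 < d ^ (d - 1)" using d1 by simp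
  have "d ^ 2 \<le> card H - 1" using le pos by (meson mult_le_cancel2)
  moreover have "1 \<le> d ^ 2" using d1 by simp
  ultimately show ?thesis by linarith
qed

theorem lemma2:
  fixes d :: nat and H :: "(nat \<Rightarrow> nat) set"
  assumes "d \<ge> 1"
    and "octahedral_system d H"
    and "card H \<le> d ^ 2"
  shows "\<forall>e\<in>H. \<exists>f\<in>H. f \<noteq> e \<and> differ_in_one d e f"
  using main[OF assms(1,2)] assms(3) by (meson not_less)

end
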